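(* Let $\mathcal{G}$ be a tomographically local GPT and let $M:\mathcal{G}\to\mathbf{RLinear}$ be a diagram-preserving, convex-linear and empirically adequate map. Suppose that for each system $A$ of $\mathcal{G}$, $\chi_A:A\to M(A)$ is a linear map satisfying $\chi_A\circ\rho=M(\rho)$ for every state $\rho$ of $A$ (states being linear maps $\mathbb{R}\to A$). Then for all systems $A,B$, $$\chi_{A\otimes B}=\chi_A\otimes\chi_B.$$
   Context: A process theory consists of systems (closed under a composition $A\otimes B$, with a trivial system $I$) and processes $T:A\to B$, closed under sequential composition $\circ$ and parallel composition $\otimes$ and containing identities; processes $I\to A$ are states, $A\to I$ effects, $I\to I$ scalars. $\mathbf{RLinear}$ is the process theory of finite-dimensional real vector spaces (composite $=$ tensor product, trivial system $\mathbb{R}$) and linear maps, with $\circ$ composition and $\otimes$ tensor product of maps. A tomographically local GPT is here a sub-process theory $\mathcal{G}$ of $\mathbf{RLinear}$ (closed under $\circ$, $\otimes$, containing identities) such that: each system $A$ is a finite-dimensional real vector space and the composite of $A$ and $B$ is $A\otimes B$; the states of $A$ span $A$ and the effects on $A$ span $A^*$; every scalar lies in $[0,1]$; for each type the set of processes is closed under convex combinations; each system $A$ has a distinguished deterministic effect $u_A$ with $u_{A\otimes B}=u_A\otimes u_B$. A map $M:\mathcal{G}\to\mathbf{RLinear}$ is diagram-preserving if it assigns to each system $A$ a vector space $M(A)$, with $M(A\otimes B)=M(A)\otimes M(B)$, $M(I)=\mathbb{R}$, and to each process $T:A\to B$ a linear map $M(T):M(A)\to M(B)$, such that $M(T'\circ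 T)=M(T')\circ M(T)$, $M(T\otimes T')=M(T)\otimes M(T')$, $M(\mathrm{id}_A)=\mathrm{id}_{M(A)}$. It is convex-linear if it preserves convex combinations of processes of the same type and coarse-grainings (sums) of effects whenever these relations hold in $\mathcal{G}$. It is empirically adequate if $M(s)=s$ for every scalar $s$. *)

theory Defs
  imports "Jordan_Normal_Form.Matrix"
begin

text \<open>
  Finite-dimensional real vector spaces are represented in coordinates: a system
  carries the space real^n (n = its dimension), a linear map real^m -> real^n is an
  n x m matrix, sequential composition is matrix product, and the tensor product
  of maps is the Kronecker product (standard index ordering, so the tensor product
  of spaces real^m (x) real^n is real^(m*n)).
\<close>

definition kron :: "real mat \<Rightarrow> real mat \<Rightarrow> real mat" where
  "kron S T = mat (dim_row S * dim_row T) (dim_col S * dim_col T)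
     (\<lambda>(i, j). S $$ (i div dim_row T, j div dim_col T) * T $$ (i mod dim_row T, j mod dim_col T))"

text \<open>A tomographically local GPT as a sub-process theory of RLinear.
  sdim A is the dimension of the vector space A, Proc A B the set of processes A -> B,
  u A the deterministic effect.\<close>

definition tl_gpt ::
  "('s \<Rightarrow> 's \<Rightarrow> 's) \<Rightarrow> 's \<Rightarrow> ('s \<Rightarrow> nat) \<Rightarrow> ('s \<Rightarrow> 's \<Rightarrow> real mat set) \<Rightarrow> ('s \<Rightarrow> real mat) \<Rightarrow> bool"
where
  "tl_gpt tens I sdim Proc u \<longleftrightarrow>
     \<comment> \<open>systems form a (strict) monoidal structure\<close>
     (\<forall>A B C. tens (tens A B) C = tens A (tens B C)) \<and>
     (\<forall>A. tens I A = A \<and> tens A I = A) \<and>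
     \<comment> \<open>composite system is the tensor product space, trivial system is R\<close>
     (\<forall>A B. sdim (tens A B) = sdim A * sdim B) \<and> sdim I = 1 \<and>
     \<comment> \<open>processes are linear maps A -> B\<close>
     (\<forall>A B. Proc A B \<subseteq> carrier_mat (sdim B) (sdim A)) \<and>
     \<comment> \<open>closure under sequential and parallel composition, identities\<close>
     (\<forall>A B C S T. T \<in> Proc A B \<longrightarrow> S \<in> Proc B C \<longrightarrow> S * T \<in> Proc A C) \<and>
     (\<forall>A B A' B' T T'. T \<in> Proc A B \<longrightarrow> T' \<in> Proc A' B' \<longrightarrow> kron T T' \<in> Proc (tens A A') (tens B B')) \<and>
     (\<forall>A. 1\<^sub>m (sdim A) \<in> Proc A A) \<and>
     \<comment> \<open>states of A span A\<close>
     (\<forall>A (x :: nat \<Rightarrow> real). \<exists>F c. finite F \<and> F \<subseteq> Proc I A \<and>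
        (\<forall>i < sdim A. x i = (\<Sum>\<rho>\<in>F. c \<rho> * \<rho> $$ (i, 0)))) \<and>
     \<comment> \<open>effects on A span the dual of A\<close>
     (\<forall>A (y :: nat \<Rightarrow> real). \<exists>F c. finite F \<and> F \<subseteq> Proc A I \<and>
        (\<forall>j < sdim A. y j = (\<Sum>e\<in>F. c e * e $$ (0, j)))) \<and>
     \<comment> \<open>scalars lie in [0,1]\<close>
     (\<forall>s \<in> Proc I I. 0 \<le> s $$ (0, 0) \<and> s $$ (0, 0) \<le> 1) \<and>
     \<comment> \<open>convexity\<close>
     (\<forall>A B T1 T2 (p :: real). T1 \<in> Proc A B \<longrightarrow> T2 \<in> Proc A B \<longrightarrow> 0 \<le> p \<longrightarrow> p \<le> 1 \<longrightarrow>
        p \<cdot>\<^sub>m T1 + (1 - p) \<cdot>\<^sub>m T2 \<in> Proc A B) \<and>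
     \<comment> \<open>deterministic effects\<close>
     (\<forall>A. u A \<in> Proc A I) \<and>
     (\<forall>A B. u (tens A B) = kron (u A) (u B))"

text \<open>A diagram-preserving map M : G -> RLinear; MS A is the dimension of M(A),
  MP A B T the linear map M(T) for T : A -> B.\<close>

definition diagram_preserving ::
  "('s \<Rightarrow> 's \<Rightarrow> 's) \<Rightarrow> 's \<Rightarrow> ('s \<Rightarrow> nat) \<Rightarrow> ('s \<Rightarrow> 's \<Rightarrow> real mat set)
   \<Rightarrow> ('s \<Rightarrow> nat) \<Rightarrow> ('s \<Rightarrow> 's \<Rightarrow> real mat \<Rightarrow> real mat) \<Rightarrow> bool"
where
  "diagram_preserving tens I sdim Proc MS MP \<longleftrightarrow>
     (\<forall>A B. MS (tens A B) = MS A * MS B) \<and> MS I = 1 \<and>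
     (\<forall>A B T. T \<in> Proc A B \<longrightarrow> MP A B T \<in> carrier_mat (MS B) (MS A)) \<and>
     (\<forall>A B C S T. T \<in> Proc A B \<longrightarrow> S \<in> Proc B C \<longrightarrow> MP A C (S * T) = MP B C S * MP A B T) \<and>
     (\<forall>A B A' B' T T'. T \<in> Proc A B \<longrightarrow> T' \<in> Proc A' B' \<longrightarrow>
        MP (tens A A') (tens B B') (kron T T') = kron (MP A B T) (MP A' B' T')) \<and>
     (\<forall>A. MP A A (1\<^sub>m (sdim A)) = 1\<^sub>m (MS A))"

definition convex_linear ::
  "'s \<Rightarrow> ('s \<Rightarrow> nat) \<Rightarrow> ('s \<Rightarrow> 's \<Rightarrow> real mat set)
   \<Rightarrow> ('s \<Rightarrow> nat) \<Rightarrow> ('s \<Rightarrow> 's \<Rightarrow> real mat \<Rightarrow> real mat) \<Rightarrow> bool"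
where
  "convex_linear I sdim Proc MS MP \<longleftrightarrow>
     \<comment> \<open>preservation of convex combinations\<close>
     (\<forall>A B T1 T2 (p :: real). T1 \<in> Proc A B \<longrightarrow> T2 \<in> Proc A B \<longrightarrow> 0 \<le> p \<longrightarrow> p \<le> 1 \<longrightarrow>
        MP A B (p \<cdot>\<^sub>m T1 + (1 - p) \<cdot>\<^sub>m T2) = p \<cdot>\<^sub>m MP A B T1 + (1 - p) \<cdot>\<^sub>m MP A B T2) \<and>
     \<comment> \<open>preservation of coarse-grainings of effects (finite sums)\<close>
     (\<forall>A e (E :: nat \<Rightarrow> real mat) K. finite K \<longrightarrow> e \<in> Proc A I \<longrightarrow> (\<forall>k\<in>K. E k \<in> Proc A I) \<longrightarrow>
        (\<forall>j < sdim A. e $$ (0, j) = (\<Sum>k\<in>K. E k $$ (0, j))) \<longrightarrow>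
        (\<forall>j < MS A. MP A I e $$ (0, j) = (\<Sum>k\<in>K. MP A I (E k) $$ (0, j))))"

definition empirically_adequate ::
  "'s \<Rightarrow> ('s \<Rightarrow> 's \<Rightarrow> real mat set) \<Rightarrow> ('s \<Rightarrow> 's \<Rightarrow> real mat \<Rightarrow> real mat) \<Rightarrow> bool"
where
  "empirically_adequate I Proc MP \<longleftrightarrow> (\<forall>s \<in> Proc I I. MP I I s = s)"

end

theory Submission
  imports Defs
begin

lemma sum_split_add_real:
  "sum f {..<m + n} = sum f {..<m} + (\<Sum>b<n. f (m + b::nat)::real)"
  by (induction n) (simp_all add: add_ac)

lemma sum_reindex_divmod:
  "(\<Sum>k<m*n. f k) = (\<Sum>a<m. \<Sum>b<n. f (a*n+b::nat) :: real)"
proof (induction m)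
  case 0 then show ?case by simp
next
  case (Suc m)
  have "(\<Sum>k<Suc m*n. f k) = (\<Sum>k<m*n + n. f k)" by (simp add: add.commute)
  also have "\<dots> = (\<Sum>k<m*n. f k) + (\<Sum>b<n. f (m*n+b))"
    by (rule sum_split_add_real)
  finally show ?case using Suc by simp
qed

lemma bilin_left:
  fixes K :: "nat \<Rightarrow> nat \<Rightarrow> real"
  assumes "finite F" "\<forall>a<nA. x a = (\<Sum>\<rho>\<in>F. c \<rho> * g \<rho> a)"
  shows "(\<Sum>a<nA. \<Sum>b<nB. K a b * x a * y b) = (\<Sum>\<rho>\<in>F. c \<rho> * (\<Sum>a<nA. \<Sum>b<nB. K a b * g \<rho> a * y b))"
proof -
  have "(\<Sum>a<nA. \<Sum>b<nB. K a b * x a * y b) = (\<Sum>a<nA. \<Sum>b<nB. \<Sum>\<rho>\<in>F. c \<rho> * (K a b * g \<rho> a * y b))"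
    using assms(2) by (intro sum.cong refl) (simp add: sum_distrib_left sum_distrib_right mult_ac)
  also have "\<dots> = (\<Sum>\<rho>\<in>F. c \<rho> * (\<Sum>a<nA. \<Sum>b<nB. K a b * g \<rho> a * y b))"
    by (simp add: sum_distrib_left sum.swap[where A=F])
  finally show ?thesis .
qed

lemma bilin_right:
  fixes K :: "nat \<Rightarrow> nat \<Rightarrow> real"
  assumes "finite F" "\<forall>b<nB. y b = (\<Sum>\<rho>\<in>F. c \<rho> * g \<rho> b)"
  shows "(\<Sum>a<nA. \<Sum>b<nB. K a b * x a * y b) = (\<Sum>\<rho>\<in>F. c \<rho> * (\<Sum>a<nA. \<Sum>b<nB. K a b * x a * g \<rho> b))"
proof -
  have "(\<Sum>a<nA. \<Sum>b<nB. K a b * x a * y b) = (\<Sum>a<nA. \<Sum>b<nB. \<Sum>\<rho>\<in>F. c \<rho> * (K a b * x a * g \<rho> b))"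
    using assms(2) by (intro sum.cong refl) (simp add: sum_distrib_left sum_distrib_right mult_ac)
  also have "\<dots> = (\<Sum>\<rho>\<in>F. c \<rho> * (\<Sum>a<nA. \<Sum>b<nB. K a b * x a * g \<rho> b))"
    by (simp add: sum_distrib_left sum.swap[where A=F])
  finally show ?thesis .
qed

lemma indicator_pick:
  fixes K :: "nat \<Rightarrow> nat \<Rightarrow> real"
  assumes "a0 < nA" "b0 < nB"
  shows "(\<Sum>a<nA. \<Sum>b<nB. K a b * (if a = a0 then 1 else 0) * (if b = b0 then 1 else 0)) = K a0 b0"
proof -
  have "(\<Sum>a<nA. \<Sum>b<nB. K a b * (if a = a0 then 1 else 0) * (if b = b0 then 1 else 0)) = (\<Sum>a<nA. (if a = a0 then K a b0 else 0))"
    apply (rule sum.cong, rule refl)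
    using assms(2) by (simp add: if_distrib[of "\<lambda>x. _ * x"] sum.delta' cong: if_cong)
  also have "\<dots> = K a0 b0" using assms(1) by simp
  finally show ?thesis .
qed

theorem proposition4:
  fixes tens :: "'s \<Rightarrow> 's \<Rightarrow> 's" and I :: 's and sdim :: "'s \<Rightarrow> nat"
    and Proc :: "'s \<Rightarrow> 's \<Rightarrow> real mat set" and u :: "'s \<Rightarrow> real mat"
    and MS :: "'s \<Rightarrow> nat" and MP :: "'s \<Rightarrow> 's \<Rightarrow> real mat \<Rightarrow> real mat"
    and \<chi> :: "'s \<Rightarrow> real mat"
  assumes "tl_gpt tens I sdim Proc u"
    and "diagram_preserving tens I sdim Proc MS MP"
    and "convex_linear I sdim Proc MS MP"
    and "empirically_adequate I Proc MP"
    and "\<And>A. \<chi> A \<in> carrier_mat (MS A) (sdim A)"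
    and "\<And>A \<rho>. \<rho> \<in> Proc I A \<Longrightarrow> \<chi> A * \<rho> = MP I A \<rho>"
  shows "\<chi> (tens A B) = kron (\<chi> A) (\<chi> B)"
proof -
  note G = assms(1)[unfolded tl_gpt_def]
  note D = assms(2)[unfolded diagram_preserving_def]
  define nA where "nA = sdim A"
  define nB where "nB = sdim B"
  define mA where "mA = MS A"
  define mB where "mB = MS B"
  define X where "X = \<chi> (tens A B)"
  have II: "tens I I = I" by (insert G, elim conjE, blast)
  have sI: "sdim I = 1" by (insert G, elim conjE, blast)
  have carP: "\<And>C D T. T \<in> Proc C D \<Longrightarrow> T \<in> carrier_mat (sdim D) (sdim C)" by (insert G, elim conjE, blast)
  have kronP: "\<And>C D C' D' T T'. T \<in> Proc C D \<Longrightarrow> T' \<in> Proc C' D' \<Longrightarrow> kron T T' \<in> Proc (tens C C') (tens D D')"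
    by (insert G, elim conjE, blast)
  have MPk: "\<And>C D C' D' T T'. T \<in> Proc C D \<Longrightarrow> T' \<in> Proc C' D' \<Longrightarrow>
        MP (tens C C') (tens D D') (kron T T') = kron (MP C D T) (MP C' D' T')"
    by (insert D, elim conjE, blast)
  have X: "X \<in> carrier_mat (mA * mB) (nA * nB)"
    using assms(5)[of "tens A B"] G D unfolding X_def mA_def mB_def nA_def nB_def by auto
  have cA: "\<chi> A \<in> carrier_mat mA nA" using assms(5) unfolding mA_def nA_def by auto
  have cB: "\<chi> B \<in> carrier_mat mB nB" using assms(5) unfolding mB_def nB_def by auto
  define K where "K r a b = X $$ (r, a*nB+b) - \<chi> A $$ (r div mB, a) * \<chi> B $$ (r mod mB, b)" for r a b
  have step1: "(\<Sum>a<nA. \<Sum>b<nB. K r a b * \<rho> $$ (a,0) * \<sigma> $$ (b,0)) = 0"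
    if r: "r < mA * mB" and \<rho>: "\<rho> \<in> Proc I A" and \<sigma>: "\<sigma> \<in> Proc I B" for r \<rho> \<sigma>
  proof -
    have c\<rho>: "\<rho> \<in> carrier_mat nA 1" using carP[OF \<rho>] sI nA_def by simp
    have c\<sigma>: "\<sigma> \<in> carrier_mat nB 1" using carP[OF \<sigma>] sI nB_def by simp
    have kP: "kron \<rho> \<sigma> \<in> Proc I (tens A B)" using kronP[OF \<rho> \<sigma>] II by simp
    have e1: "X * kron \<rho> \<sigma> = kron (\<chi> A * \<rho>) (\<chi> B * \<sigma>)"
      using assms(6)[OF kP] MPk[OF \<rho> \<sigma>] II assms(6)[OF \<rho>] assms(6)[OF \<sigma>] unfolding X_def by simp
    have mB0: "0 < mB" using r by (cases "mB = 0") auto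
    have rA: "r div mB < mA" using r mB0 by (simp add: less_mult_imp_div_less)
    have rB: "r mod mB < mB" using mB0 by simp
    have dk: "dim_row (kron \<rho> \<sigma>) = nA * nB" "dim_col (kron \<rho> \<sigma>) = 1"
      using c\<rho> c\<sigma> unfolding kron_def by auto
    have "(X * kron \<rho> \<sigma>) $$ (r, 0) = (\<Sum>k<nA*nB. X $$ (r,k) * kron \<rho> \<sigma> $$ (k,0))"
      using X dk r by (simp add: scalar_prod_def atLeast0LessThan)
    also have "\<dots> = (\<Sum>a<nA. \<Sum>b<nB. X $$ (r,a*nB+b) * (\<rho> $$ (a,0) * \<sigma> $$ (b,0)))"
    proof -
      have "(\<Sum>k<nA*nB. X $$ (r,k) * kron \<rho> \<sigma> $$ (k,0)) =
            (\<Sum>a<nA. \<Sum>b<nB. X $$ (r,a*nB+b) * kron \<rho> \<sigma> $$ (a*nB+b,0))"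
        by (rule sum_reindex_divmod)
      also have "\<dots> = (\<Sum>a<nA. \<Sum>b<nB. X $$ (r,a*nB+b) * (\<rho> $$ (a,0) * \<sigma> $$ (b,0)))"
      proof (intro sum.cong refl)
        fix a b assume a: "a \<in> {..<nA}" and b: "b \<in> {..<nB}"
        have lt: "a*nB+b < nA*nB"
          by (metis a b lessThan_iff add.commute add_less_cancel_left less_le_trans mult.commute mult_Suc_right mult_le_mono2 Suc_leI)
        show "X $$ (r,a*nB+b) * kron \<rho> \<sigma> $$ (a*nB+b,0) = X $$ (r,a*nB+b) * (\<rho> $$ (a,0) * \<sigma> $$ (b,0))"
          using c\<rho> c\<sigma> lt b unfolding kron_def by auto
      qed
      finally show ?thesis .
    qed
    finally have L: "(X * kron \<rho> \<sigma>) $$ (r, 0) = (\<Sum>a<nA. \<Sum>b<nB. X $$ (r,a*nB+b) * (\<rho> $$ (a,0) * \<sigma> $$ (b,0)))" .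
    have "kron (\<chi> A * \<rho>) (\<chi> B * \<sigma>) $$ (r,0) = (\<chi> A * \<rho>) $$ (r div mB, 0) * (\<chi> B * \<sigma>) $$ (r mod mB, 0)"
      using cA cB c\<rho> c\<sigma> r unfolding kron_def by auto
    also have "\<dots> = (\<Sum>a<nA. \<chi> A $$ (r div mB, a) * \<rho> $$ (a,0)) * (\<Sum>b<nB. \<chi> B $$ (r mod mB, b) * \<sigma> $$ (b,0))"
      using cA cB c\<rho> c\<sigma> rA rB by (simp add: scalar_prod_def atLeast0LessThan)
    also have "\<dots> = (\<Sum>a<nA. \<Sum>b<nB. (\<chi> A $$ (r div mB, a) * \<chi> B $$ (r mod mB, b)) * (\<rho> $$ (a,0) * \<sigma> $$ (b,0)))"
      by (simp add: sum_product mult_ac)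
    finally have R: "kron (\<chi> A * \<rho>) (\<chi> B * \<sigma>) $$ (r,0) = \<dots>" .
    show ?thesis using L R e1 unfolding K_def
      by (simp add: algebra_simps sum_subtractf)
  qed
  have step2: "(\<Sum>a<nA. \<Sum>b<nB. K r a b * x a * y b) = 0" if r: "r < mA * mB" for r x y
  proof -
    have h1: "(\<Sum>a<nA. \<Sum>b<nB. K r a b * x a * \<sigma> $$ (b,0)) = 0" if \<sigma>: "\<sigma> \<in> Proc I B" for \<sigma>
    proof -
      obtain F c where F: "finite F" "F \<subseteq> Proc I A" "\<forall>i < nA. x i = (\<Sum>\<rho>\<in>F. c \<rho> * \<rho> $$ (i, 0))"
        using G unfolding nA_def by meson
      have "(\<Sum>a<nA. \<Sum>b<nB. K r a b * x a * \<sigma> $$ (b,0)) =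
         (\<Sum>\<rho>\<in>F. c \<rho> * (\<Sum>a<nA. \<Sum>b<nB. K r a b * \<rho> $$ (a,0) * \<sigma> $$ (b,0)))"
        by (rule bilin_left[OF F(1)]) (use F(3) in auto)
      also have "\<dots> = 0" using step1[OF r _ \<sigma>] F(2) by (simp add: subset_iff)
      finally show ?thesis .
    qed
    obtain F c where F: "finite F" "F \<subseteq> Proc I B" "\<forall>i < nB. y i = (\<Sum>\<rho>\<in>F. c \<rho> * \<rho> $$ (i, 0))"
      using G unfolding nB_def by meson
    have "(\<Sum>a<nA. \<Sum>b<nB. K r a b * x a * y b) =
         (\<Sum>\<rho>\<in>F. c \<rho> * (\<Sum>a<nA. \<Sum>b<nB. K r a b * x a * \<rho> $$ (b,0)))"
      by (rule bilin_right[OF F(1)]) (use F(3) in auto)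
    also have "\<dots> = 0" using h1 F(2) by (simp add: subset_iff)
    finally show ?thesis .
  qed
  have Kz: "K r a b = 0" if "r < mA * mB" "a < nA" "b < nB" for r a b
    using step2[OF that(1), of "\<lambda>a'. if a' = a then 1 else 0" "\<lambda>b'. if b' = b then 1 else 0"]
      indicator_pick[OF that(2,3), of "K r"] by simp
  have dY: "kron (\<chi> A) (\<chi> B) \<in> carrier_mat (mA * mB) (nA * nB)"
    using cA cB unfolding kron_def by auto
  show ?thesis unfolding X_def[symmetric]
  proof (rule eq_matI)
    show "dim_row X = dim_row (kron (\<chi> A) (\<chi> B))" "dim_col X = dim_col (kron (\<chi> A) (\<chi> B))"
      using X dY by auto
    fix r k assume r: "r < dim_row (kron (\<chi> A) (\<chi> B))" and k: "k < dim_col (kron (\<chi> A) (\<chi> B))"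
    then have r': "r < mA * mB" and k': "k < nA * nB" using dY by auto
    have nB0: "0 < nB" using k' by (cases "nB = 0") auto
    have "K r (k div nB) (k mod nB) = 0"
      using Kz[OF r'] k' nB0 by (simp add: less_mult_imp_div_less)
    then show "X $$ (r, k) = kron (\<chi> A) (\<chi> B) $$ (r, k)"
      using r' k' cA cB unfolding K_def kron_def by auto
  qed
qed

end
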